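(* Let $K\ge2$ and let $\mathbf{W},\mathbf{W}'$ be $K\times K$ invertible row-stochastic matrices. Then, entrywise, $$\boldsymbol{\Phi}(\mathbf{W}\mathbf{W}')\ge\boldsymbol{\Phi}(\mathbf{W}),$$ with equality in all $K^2$ entries if and only if $\mathbf{W}'$ is a permutation matrix.
   Context: For an invertible matrix $\mathbf{W}$, $\boldsymbol{\Phi}(\mathbf{W})=\mathbf{W}(\mathbf{W}^{-1}\odot\mathbf{W}^{-1})$, where $\odot$ is the entrywise (Hadamard) product. A matrix inequality $\mathbf{A}\ge\mathbf{B}$ means $A_{k,\ell}\ge B_{k,\ell}$ for all $k,\ell$. *)

theory Defs
  imports "HOL-Analysis.Analysis"
begin

definition hadamard :: "real^'n^'n \<Rightarrow> real^'n^'n \<Rightarrow> real^'n^'n" where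
  "hadamard A B = (\<chi> i j. A $ i $ j * B $ i $ j)"

definition Phi :: "real^'n^'n \<Rightarrow> real^'n^'n" where
  "Phi W = W ** hadamard (matrix_inv W) (matrix_inv W)"

definition row_stochastic :: "real^'n^'n \<Rightarrow> bool" where
  "row_stochastic W \<longleftrightarrow> (\<forall>i j. W $ i $ j \<ge> 0) \<and> (\<forall>i. (\<Sum>j\<in>UNIV. W $ i $ j) = 1)"

definition permutation_matrix :: "real^'n^'n \<Rightarrow> bool" where
  "permutation_matrix P \<longleftrightarrow>
     (\<exists>p. p permutes (UNIV :: 'n set) \<and> P = (\<chi> i j. if j = p i then 1 else 0))"

definition mat_ge :: "real^'n^'n \<Rightarrow> real^'n^'n \<Rightarrow> bool" where
  "mat_ge A B \<longleftrightarrow> (\<forall>k l. A $ k $ l \<ge> B $ k $ l)"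

end

theory Submission
  imports Defs
begin

lemma inv_props:
  fixes A :: "real^'n^'n"
  assumes "invertible A"
  shows "A ** matrix_inv A = mat 1 \<and> matrix_inv A ** A = mat 1"
  using assms unfolding invertible_def matrix_inv_def by (rule someI_ex)

lemma rows_distinct:
  fixes A B :: "real^'n^'n"
  assumes "A ** B = mat 1" "A $ i = A $ j"
  shows "i = j"
proof (rule ccontr)
  assume ne: "i \<noteq> j"
  have "(A ** B) $ i $ i = (A ** B) $ j $ i"
    unfolding matrix_matrix_mult_def using assms(2) by simp
  then show False using ne unfolding assms(1) mat_def by simp
qed

lemma col_nonzero:
  fixes A B :: "real^'n^'n"
  assumes "B ** A = mat 1"
  shows "\<exists>k. A $ k $ m \<noteq> 0"
proof (rule ccontr)
  assume "\<not> ?thesis"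
  then have "(B ** A) $ m $ m = 0" unfolding matrix_matrix_mult_def by simp
  then show False unfolding assms mat_def by simp
qed

lemma variance_id:
  fixes p u :: "'a::finite \<Rightarrow> real"
  assumes "(\<Sum>j\<in>UNIV. p j) = 1"
  shows "(\<Sum>j\<in>UNIV. p j * (u j)\<^sup>2) - (\<Sum>j\<in>UNIV. p j * u j)\<^sup>2
       = (\<Sum>j\<in>UNIV. p j * (u j - (\<Sum>i\<in>UNIV. p i * u i))\<^sup>2)"
proof -
  define a where "a = (\<Sum>i\<in>UNIV. p i * u i)"
  have "(\<Sum>j\<in>UNIV. p j * (u j - a)\<^sup>2)
      = (\<Sum>j\<in>UNIV. p j * (u j)\<^sup>2) - 2 * a * (\<Sum>j\<in>UNIV. p j * u j) + a\<^sup>2 * (\<Sum>j\<in>UNIV. p j)"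
    by (simp add: power2_eq_square algebra_simps sum.distrib sum_subtractf sum_distrib_left sum_distrib_right)
  also have "\<dots> = (\<Sum>j\<in>UNIV. p j * (u j)\<^sup>2) - a\<^sup>2"
    using assms unfolding a_def by (simp add: power2_eq_square)
  finally show ?thesis unfolding a_def by simp
qed

lemma variance_nonneg:
  fixes p u :: "'a::finite \<Rightarrow> real"
  assumes "(\<Sum>j\<in>UNIV. p j) = 1" "\<And>j. p j \<ge> 0"
  shows "(\<Sum>j\<in>UNIV. p j * (u j)\<^sup>2) - (\<Sum>j\<in>UNIV. p j * u j)\<^sup>2 \<ge> 0"
  unfolding variance_id[OF assms(1)] by (intro sum_nonneg mult_nonneg_nonneg assms(2)) simp

lemma variance_zero:
  fixes p u :: "'a::finite \<Rightarrow> real"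
  assumes "(\<Sum>j\<in>UNIV. p j) = 1" "\<And>j. p j \<ge> 0"
    and "(\<Sum>j\<in>UNIV. p j * (u j)\<^sup>2) - (\<Sum>j\<in>UNIV. p j * u j)\<^sup>2 = 0"
    and "p j \<noteq> 0"
  shows "u j = (\<Sum>i\<in>UNIV. p i * u i)"
proof -
  have "(\<Sum>j\<in>UNIV. p j * (u j - (\<Sum>i\<in>UNIV. p i * u i))\<^sup>2) = 0"
    using assms(3) unfolding variance_id[OF assms(1)] .
  then have "\<forall>j\<in>UNIV. p j * (u j - (\<Sum>i\<in>UNIV. p i * u i))\<^sup>2 = 0"
    by (subst (asm) sum_nonneg_eq_0_iff) (auto intro: mult_nonneg_nonneg assms(2))
  then show ?thesis using assms(4) by auto
qed

lemma sum_ind: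
  fixes f :: "'a::finite \<Rightarrow> real"
  shows "(\<Sum>j\<in>UNIV. (if j = a then 1 else 0) * f j) = f a"
proof -
  have "(\<Sum>j\<in>UNIV. (if j = a then 1 else 0) * f j) = (\<Sum>j\<in>UNIV. if j = a then f j else 0)"
    by (rule sum.cong) auto
  also have "\<dots> = f a" by simp
  finally show ?thesis .
qed

theorem theorem7:
  fixes W W' :: "real^'n^'n"
  assumes "CARD('n) \<ge> 2"
    and "invertible W" and "invertible W'"
    and "row_stochastic W" and "row_stochastic W'"
  shows "mat_ge (Phi (W ** W')) (Phi W) \<and>
         ((\<forall>k l. Phi (W ** W') $ k $ l = Phi W $ k $ l) \<longleftrightarrow> permutation_matrix W')"
proof -
  define V where "V = matrix_inv W"
  define V' where "V' = matrix_inv W'"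
  define X where "X = W ** W'"
  define U where "U = matrix_inv X"
  have WV: "W ** V = mat 1" "V ** W = mat 1" using inv_props[OF assms(2)] V_def by auto
  have WV': "W' ** V' = mat 1" "V' ** W' = mat 1" using inv_props[OF assms(3)] V'_def by auto
  have "invertible X" unfolding invertible_def X_def
  proof (intro exI conjI)
    show "W ** W' ** (V' ** V) = mat 1"
      by (metis WV(1) WV'(1) matrix_mul_assoc matrix_mul_rid)
    show "V' ** V ** (W ** W') = mat 1"
      by (metis WV(2) WV'(2) matrix_mul_assoc matrix_mul_rid)
  qed
  then have XU: "X ** U = mat 1" "U ** X = mat 1" using inv_props U_def by auto
  have VWU: "V = W' ** U"
  proof -
    have "V ** (X ** U) = V" using XU by simp
    then show ?thesis unfolding X_def
      by (metis WV(2) matrix_mul_assoc matrix_mul_lid)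
  qed
  have Wnn: "\<And>i j. W $ i $ j \<ge> 0" and W'nn: "\<And>i j. W' $ i $ j \<ge> 0"
    and W's: "\<And>i. (\<Sum>j\<in>UNIV. W' $ i $ j) = 1"
    using assms(4,5) unfolding row_stochastic_def by auto
  have Xe: "X $ k $ j = (\<Sum>m\<in>UNIV. W $ k $ m * W' $ m $ j)" for k j
    by (simp add: X_def matrix_matrix_mult_def)
  define D where "D m l = (\<Sum>j\<in>UNIV. W' $ m $ j * (U $ j $ l)\<^sup>2) - (\<Sum>j\<in>UNIV. W' $ m $ j * U $ j $ l)\<^sup>2" for m l
  have Dnn: "D m l \<ge> 0" for m l
    unfolding D_def by (rule variance_nonneg[OF W's W'nn])
  have diff: "Phi X $ k $ l - Phi W $ k $ l = (\<Sum>m\<in>UNIV. W $ k $ m * D m l)" for k l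
  proof -
    have "Phi X $ k $ l = (\<Sum>j\<in>UNIV. X $ k $ j * (U $ j $ l)\<^sup>2)"
      unfolding Phi_def U_def[symmetric]
      by (simp add: matrix_matrix_mult_def hadamard_def power2_eq_square)
    also have "\<dots> = (\<Sum>j\<in>UNIV. (\<Sum>m\<in>UNIV. W $ k $ m * W' $ m $ j) * (U $ j $ l)\<^sup>2)"
      unfolding Xe ..
    also have "\<dots> = (\<Sum>m\<in>UNIV. W $ k $ m * (\<Sum>j\<in>UNIV. W' $ m $ j * (U $ j $ l)\<^sup>2))"
      unfolding sum_distrib_right sum_distrib_left mult.assoc by (rule sum.swap)
    finally have 1: "Phi X $ k $ l = \<dots>" .
    have 2: "Phi W $ k $ l = (\<Sum>m\<in>UNIV. W $ k $ m * (\<Sum>j\<in>UNIV. W' $ m $ j * U $ j $ l)\<^sup>2)"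
      unfolding Phi_def V_def[symmetric] VWU
      by (simp add: matrix_matrix_mult_def hadamard_def power2_eq_square)
    show ?thesis unfolding 1 2 D_def by (simp add: sum_subtractf right_diff_distrib)
  qed
  have ge: "mat_ge (Phi X) (Phi W)"
    unfolding mat_ge_def
  proof (intro allI)
    fix k l
    have "0 \<le> (\<Sum>m\<in>UNIV. W $ k $ m * D m l)"
      by (intro sum_nonneg mult_nonneg_nonneg Wnn Dnn)
    then show "Phi W $ k $ l \<le> Phi X $ k $ l" using diff[of k l] by simp
  qed
  have eq: "(\<forall>k l. Phi X $ k $ l = Phi W $ k $ l) \<longleftrightarrow> permutation_matrix W'"
  proof
    assume "permutation_matrix W'"
    then obtain p where p: "W' = (\<chi> i j. if j = p i then 1 else 0)"
      unfolding permutation_matrix_def by auto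
    have "D m l = 0" for m l
      unfolding D_def p by (simp add: sum_ind)
    then show "\<forall>k l. Phi X $ k $ l = Phi W $ k $ l" using diff by simp
  next
    assume all: "\<forall>k l. Phi X $ k $ l = Phi W $ k $ l"
    have D0: "D m l = 0" for m l
    proof -
      obtain k where k: "W $ k $ m \<noteq> 0" using col_nonzero[OF WV(2)] by blast
      have "(\<Sum>m\<in>UNIV. W $ k $ m * D m l) = 0" using diff[of k l] all by simp
      then have "\<forall>m\<in>UNIV. W $ k $ m * D m l = 0"
        by (subst (asm) sum_nonneg_eq_0_iff) (auto intro: mult_nonneg_nonneg Wnn Dnn)
      then have "W $ k $ m * D m l = 0" by blast
      then show ?thesis using k by simp
    qed
    have same: "j = j'" if "W' $ m $ j \<noteq> 0" "W' $ m $ j' \<noteq> 0" for m j j'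
    proof -
      have "U $ j $ l = U $ j' $ l" for l
        using variance_zero[OF W's W'nn, of m "\<lambda>j. U $ j $ l"] D0[of m l] that
        unfolding D_def by simp
      then have "U $ j = U $ j'" by (simp add: vec_eq_iff)
      then show ?thesis using rows_distinct[OF XU(2)] by blast
    qed
    have ex: "\<exists>j. W' $ m $ j \<noteq> 0" for m
    proof (rule ccontr)
      assume "\<not> ?thesis"
      then have "(\<Sum>j\<in>UNIV. W' $ m $ j) = 0" by simp
      then show False using W's[of m] by simp
    qed
    define p where "p m = (SOME j. W' $ m $ j \<noteq> 0)" for m
    have pnz: "W' $ m $ p m \<noteq> 0" for m unfolding p_def using ex[of m] by (rule someI_ex)
    have zero: "W' $ m $ j = 0" if "j \<noteq> p m" for m j
      using same[OF _ pnz] that by blast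
    have one: "W' $ m $ p m = 1" for m
    proof -
      have "(\<Sum>j\<in>UNIV. W' $ m $ j) = W' $ m $ p m"
        by (rule sum.remove[where x="p m", THEN trans]) (auto intro!: sum.neutral zero)
      then show ?thesis using W's[of m] by simp
    qed
    have Weq: "W' = (\<chi> i j. if j = p i then 1 else 0)"
      by (simp add: vec_eq_iff one zero)
    have "inj p"
    proof (rule injI)
      fix a b assume "p a = p b"
      then have "W' $ a = W' $ b" unfolding Weq by (simp add: vec_eq_iff)
      then show "a = b" using rows_distinct[OF WV'(1)] by blast
    qed
    then have "p permutes UNIV" by (intro inj_imp_permutes) auto
    then show "permutation_matrix W'" unfolding permutation_matrix_def using Weq by blast
  qed
  show ?thesis using ge eq unfolding X_def by simp
qed

end
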